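(* If $\mathcal D_n$ is the minimal (quotient) DFA of a left ideal, with initial state $0$ and transition semigroup $T_n$, then every transformation in $T_n$ is initially aperiodic, and no state of $\mathcal D_n$ accepts the empty language.
   Context: A left ideal is a nonempty $L\subseteq\Sigma^*$ with $L=\Sigma^*L$. The transition semigroup is the set of state transformations induced by nonempty words; $qt$ denotes the image of state $q$ under $t$. For a transformation $t$, the sequence $0,0t,0t^2,\dots$ eventually repeats: there are $i<j$ with $0,0t,\dots,0t^{j-1}$ distinct and $0t^j=0t^i$; $j-i$ is the period of $t$, and $t$ is initially aperiodic if its period is $1$. *)

theory Defs
  imports Main
begin

definition left_ideal :: "'a list set \<Rightarrow> bool" where
  "left_ideal L \<longleftrightarrow> L \<noteq> {} \<and> L = {u @ v | u v. v \<in> L}"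

definition lquot :: "'a list \<Rightarrow> 'a list set \<Rightarrow> 'a list set" where
  "lquot w K = {x. w @ x \<in> K}"

text \<open>Quotient DFA of L: the states are the quotients of L, the initial state (state 0)
  is L itself, the transition on a letter a maps K to lquot [a] K, a state K accepts
  the language K, and a word w induces the transformation K \<mapsto> lquot w K.\<close>
definition qstates :: "'a list set \<Rightarrow> 'a list set set" where
  "qstates L = {lquot w L | w. True}"

definition qinit :: "'a list set \<Rightarrow> 'a list set" where
  "qinit L = L"

definition qdelta :: "'a list set \<Rightarrow> 'a list \<Rightarrow> 'a list set" where
  "qdelta K w = lquot w K"

definition qtrans :: "'a list set \<Rightarrow> 'a list \<Rightarrow> ('a list set \<Rightarrow> 'a list set)" where
  "qtrans L w = (\<lambda>K. if K \<in> qstates L then qdelta K w else K)"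

definition trans_semigroup :: "'a list set \<Rightarrow> ('a list set \<Rightarrow> 'a list set) set" where
  "trans_semigroup L = {qtrans L w | w. w \<noteq> []}"

definition state_lang :: "'a list set \<Rightarrow> 'a list set" where
  "state_lang K = {x. [] \<in> qdelta K x}"

text \<open>Period of t w.r.t. initial state q0: j - i where 0,...,q0 t^(j-1) are distinct and
  q0 t^j = q0 t^i.  Initially aperiodic: period is 1.\<close>
definition initially_aperiodic :: "'s \<Rightarrow> ('s \<Rightarrow> 's) \<Rightarrow> bool" where
  "initially_aperiodic q0 t \<longleftrightarrow>
     (\<forall>i j. i < j \<and> inj_on (\<lambda>k. (t ^^ k) q0) {..<j} \<and> (t ^^ j) q0 = (t ^^ i) q0 \<longrightarrow> j - i = 1)"

end

theory Submission
  imports Defs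
begin

lemma ideal_mem: assumes "left_ideal L" "v \<in> L" shows "u @ v \<in> L"
proof -
  have "L = {u @ v | u v. v \<in> L}" using assms(1) unfolding left_ideal_def by blast
  then show ?thesis using assms(2) by blast
qed

lemma lquot_lquot: "lquot w (lquot v L) = lquot (v @ w) L"
  unfolding lquot_def by auto

lemma iter_eq:
  "(qtrans L w ^^ k) L = lquot (concat (replicate k w)) L"
proof (induction k)
  case 0 then show ?case by (simp add: lquot_def)
next
  case (Suc k)
  have st: "lquot (concat (replicate k w)) L \<in> qstates L" unfolding qstates_def by blast
  have "concat (replicate k w) @ w = concat (replicate (Suc k) w)"
    by (metis concat.simps(1) concat.simps(2) concat_append replicate_append_same
          self_append_conv replicate_Suc append.right_neutral)
  then show ?case using Suc st
    by (simp add: qtrans_def qdelta_def lquot_lquot del: replicate.simps)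
qed

lemma iter_mono:
  assumes "left_ideal L"
  shows "(qtrans L w ^^ k) L \<subseteq> (qtrans L w ^^ Suc k) L"
proof -
  have "concat (replicate (Suc k) w) = w @ concat (replicate k w)" by simp
  then show ?thesis unfolding iter_eq lquot_def
    using ideal_mem[OF assms] by auto
qed

lemma iter_mono2:
  assumes "left_ideal L" "i \<le> j"
  shows "(qtrans L w ^^ i) L \<subseteq> (qtrans L w ^^ j) L"
  using assms(2)
proof (induction j rule: dec_induct)
  case base then show ?case by simp
next
  case (step n) then show ?case using iter_mono[OF assms(1), where w=w and k=n] by blast
qed

theorem lemma2:
  fixes L :: "'a list set"
  assumes "finite (UNIV :: 'a set)"
    and "left_ideal L"
    and "finite (qstates L)"
  shows "(\<forall>t \<in> trans_semigroup L. initially_aperiodic (qinit L) t)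
       \<and> (\<forall>K \<in> qstates L. state_lang K \<noteq> {})"
proof
  show "\<forall>t \<in> trans_semigroup L. initially_aperiodic (qinit L) t"
  proof
    fix t assume "t \<in> trans_semigroup L"
    then obtain w where t: "t = qtrans L w" unfolding trans_semigroup_def by blast
    show "initially_aperiodic (qinit L) t"
      unfolding initially_aperiodic_def qinit_def
    proof (intro allI impI)
      fix i j assume h: "i < j \<and> inj_on (\<lambda>k. (t ^^ k) L) {..<j} \<and> (t ^^ j) L = (t ^^ i) L"
      show "j - i = 1"
      proof (rule ccontr)
        assume "j - i \<noteq> 1"
        with h have ij: "Suc i < j" by auto
        have "(t ^^ Suc i) L \<subseteq> (t ^^ j) L" using iter_mono2[OF assms(2)] ij t
          by (simp del: funpow.simps)
        moreover have "(t ^^ i) L \<subseteq> (t ^^ Suc i) L" using iter_mono[OF assms(2)] t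
          by (simp del: funpow.simps)
        ultimately have "(t ^^ Suc i) L = (t ^^ i) L" using h by blast
        moreover have "Suc i \<in> {..<j}" "i \<in> {..<j}" using ij by auto
        ultimately show False using h unfolding inj_on_def by (metis n_not_Suc_n)
      qed
    qed
  qed
  show "\<forall>K \<in> qstates L. state_lang K \<noteq> {}"
  proof
    fix K assume "K \<in> qstates L"
    then obtain v where K: "K = lquot v L" unfolding qstates_def by blast
    obtain y where y: "y \<in> L" using assms(2) unfolding left_ideal_def by blast
    have "y \<in> state_lang K" using ideal_mem[OF assms(2) y, of v]
      unfolding K state_lang_def qdelta_def lquot_def by simp
    then show "state_lang K \<noteq> {}" by blast
  qed
qed

end
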